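(* Let $\mathfrak u=(a_0,a_1,\dots)$ be a (finite or infinite) sequence of non-negative integers such that $\Upsilon^{(6)}(\mathfrak u)=\mathfrak u$. Then $\mathfrak u$ has at most one champion.
   Context: For a finite or infinite sequence $\mathfrak u=(a_0,a_1,\dots)$ of non-negative integers, the P-G triangle generated by $\mathfrak u$ consists of the numbers $d_k^{(j)}$ defined by $d_k^{(0)}=a_k$ and $d_k^{(j+1)}=|d_{k+1}^{(j)}-d_k^{(j)}|$ for $j,k\ge 0$ (for a finite sequence $(a_0,\dots,a_{N-1})$, for $0\le k\le N-1-j$). The operator $\Upsilon$ sends $\mathfrak u$ to the left edge $(d_0^{(0)},d_0^{(1)},d_0^{(2)},\dots)$ of its P-G triangle (a sequence of the same length as $\mathfrak u$); $\Upsilon^{(n)}$ denotes its $n$-th iterate. The term $a_n$ ($n\ge0$) is a champion of $\mathfrak u$ if $a_n>0$ and $a_j<a_n$ for all $0\le j<n$. *)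

theory Defs
  imports Main "HOL-Library.Extended_Nat"
begin

text \<open>A sequence (finite of length L, or infinite when L = \<infinity>) of non-negative
integers is represented by a function a :: nat \<Rightarrow> nat together with its length
L :: enat; only the values a k with k < L are meaningful.\<close>

fun pg :: "(nat \<Rightarrow> nat) \<Rightarrow> nat \<Rightarrow> nat \<Rightarrow> nat" where
  "pg a 0 k = a k"
| "pg a (Suc j) k = nat \<bar>int (pg a j (Suc k)) - int (pg a j k)\<bar>"

text \<open>Left edge of the P-G triangle. Entry j depends only on a 0, ..., a j, so for a
finite sequence of length L the first L entries are the finite Upsilon.\<close>
definition Upsilon :: "(nat \<Rightarrow> nat) \<Rightarrow> (nat \<Rightarrow> nat)" where
  "Upsilon a = (\<lambda>j. pg a j 0)"

definition champion :: "(nat \<Rightarrow> nat) \<Rightarrow> nat \<Rightarrow> bool" where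
  "champion a n \<longleftrightarrow> a n > 0 \<and> (\<forall>j<n. a j < a n)"

end

theory Submission
  imports Defs
begin

lemma pg_bound:
  "(\<forall>i. k \<le> i \<and> i \<le> k + j \<longrightarrow> a i \<le> B) \<Longrightarrow> pg a j k \<le> B"
proof (induction j arbitrary: k)
  case 0 then show ?case by auto
next
  case (Suc j)
  have "pg a j (Suc k) \<le> B" using Suc.prems by (intro Suc.IH) auto
  moreover have "pg a j k \<le> B" using Suc.prems by (intro Suc.IH) auto
  ultimately show ?case by simp
qed

lemma ups_bound:
  "(\<forall>i\<le>n. a i \<le> B) \<Longrightarrow> (\<forall>i\<le>n. Upsilon a i \<le> B)"
  unfolding Upsilon_def by (auto intro!: pg_bound)

lemma ups_iter_bound:
  "(\<forall>i\<le>n. a i \<le> B) \<Longrightarrow> (\<forall>i\<le>n. (Upsilon ^^ m) a i \<le> B)"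
  by (induction m) (auto dest: ups_bound)

lemma pg_zero:
  "(\<forall>i. k < i \<and> i \<le> k + j \<longrightarrow> a i = 0) \<Longrightarrow> pg a j k = a k"
proof (induction j arbitrary: k)
  case 0 then show ?case by auto
next
  case (Suc j)
  have "pg a j (Suc k) = a (Suc k)" using Suc.prems by (intro Suc.IH) auto
  moreover have "a (Suc k) = 0" using Suc.prems by auto
  moreover have "pg a j k = a k" using Suc.prems by (intro Suc.IH) auto
  ultimately show ?case by simp
qed

lemma absdiff_le: "nat \<bar>int D - int x\<bar> \<le> max D (x::nat)" by arith

lemma absdiff_eq: "nat \<bar>int D - int x\<bar> = A \<Longrightarrow> D \<le> A \<Longrightarrow> x < (A::nat) \<Longrightarrow> x = 0 \<and> D = A" by arith

lemma pg_diag: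
  "(\<forall>i. k \<le> i \<and> i < k + j \<longrightarrow> a i \<le> B) \<Longrightarrow> B < a (k + j) \<Longrightarrow>
   pg a j k \<le> a (k + j) \<and> (pg a j k = a (k + j) \<longrightarrow> (\<forall>i. k \<le> i \<and> i < k + j \<longrightarrow> a i = 0))"
proof (induction j arbitrary: k)
  case 0 then show ?case by auto
next
  case (Suc j)
  define A where "A = a (k + Suc j)"
  define D where "D = pg a j (Suc k)"
  define x where "x = pg a j k"
  have p1: "\<forall>i. Suc k \<le> i \<and> i < Suc k + j \<longrightarrow> a i \<le> B" using Suc.prems by auto
  have p2: "B < a (Suc k + j)" using Suc.prems by simp
  have IH0: "D \<le> a (Suc k + j) \<and> (D = a (Suc k + j) \<longrightarrow> (\<forall>i. Suc k \<le> i \<and> i < Suc k + j \<longrightarrow> a i = 0))"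
    unfolding D_def by (rule Suc.IH[OF p1 p2])
  have AA: "a (Suc k + j) = A" unfolding A_def by simp
  have IH: "D \<le> A \<and> (D = A \<longrightarrow> (\<forall>i. Suc k \<le> i \<and> i < Suc k + j \<longrightarrow> a i = 0))"
    using IH0 unfolding AA .
  have xB: "x \<le> B" unfolding x_def using Suc.prems by (intro pg_bound) auto
  have AB: "B < A" using Suc.prems A_def by simp
  have eq: "pg a (Suc j) k = nat \<bar>int D - int x\<bar>" by (simp add: D_def x_def)
  show ?case
  proof
    have "max D x \<le> A" using IH xB AB by simp
    then show "pg a (Suc j) k \<le> a (k + Suc j)" using eq absdiff_le[of D x] A_def by linarith
  next
    show "pg a (Suc j) k = a (k + Suc j) \<longrightarrow> (\<forall>i. k \<le> i \<and> i < k + Suc j \<longrightarrow> a i = 0)"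
    proof
      assume "pg a (Suc j) k = a (k + Suc j)"
      then have e: "nat \<bar>int D - int x\<bar> = A" using eq A_def by simp
      have "x < A" using xB AB by linarith
      then have x0: "x = 0" and DA: "D = A" using absdiff_eq[OF e] IH by auto
      have z: "\<forall>i. Suc k \<le> i \<and> i < Suc k + j \<longrightarrow> a i = 0" using IH DA by blast
      have "pg a j k = a k" using z by (intro pg_zero) auto
      then have "a k = 0" using x0 x_def by simp
      show "\<forall>i. k \<le> i \<and> i < k + Suc j \<longrightarrow> a i = 0"
      proof (intro allI impI)
        fix i assume i: "k \<le> i \<and> i < k + Suc j"
        show "a i = 0"
        proof (cases "i = k")
          case True then show ?thesis using \<open>a k = 0\<close> by simp
        next
          case False then show ?thesis using z i by simp
        qed
      qed
    qed
  qed
qed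

lemma ups_strict:
  assumes "\<forall>i<q. a i < a q" "i0 < q" "a i0 > 0"
  shows "Upsilon a q < a q"
proof -
  have "pg a q 0 \<le> a (0 + q) \<and> (pg a q 0 = a (0 + q) \<longrightarrow> (\<forall>i. 0 \<le> i \<and> i < 0 + q \<longrightarrow> a i = 0))"
    using assms by (intro pg_diag[where B = "a q - 1"]) auto
  then have h1: "pg a q 0 \<le> a q" and h2: "pg a q 0 = a q \<Longrightarrow> a i0 = 0" using assms(2) by auto
  show ?thesis
  proof (rule ccontr)
    assume "\<not> Upsilon a q < a q"
    then have "pg a q 0 = a q" using h1 by (simp add: Upsilon_def)
    then show False using h2 assms(3) by simp
  qed
qed

theorem theorem2p4:
  fixes a :: "nat \<Rightarrow> nat" and L :: enat
  assumes "\<forall>n. enat n < L \<longrightarrow> (Upsilon ^^ 6) a n = a n"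
  shows "\<forall>m n. enat m < L \<and> enat n < L \<and> champion a m \<and> champion a n \<longrightarrow> m = n"
proof -
  have key: "False" if mn: "m < n" "enat n < L" "champion a m" "champion a n" for m n
  proof -
    have pos: "a m > 0" and lt: "\<forall>i<n. a i < a n" using mn unfolding champion_def by auto
    define B where "B = a n - 1"
    have b0: "\<forall>i<n. a i \<le> B" using lt B_def by fastforce
    have s: "Upsilon a n < a n" using ups_strict[OF lt mn(1) pos] .
    have b1: "\<forall>i\<le>n. Upsilon a i \<le> B"
    proof (intro allI impI)
      fix i assume "i \<le> n"
      then show "Upsilon a i \<le> B"
      proof (cases "i = n")
        case True then show ?thesis using s B_def by simp
      next
        case False
        then have "\<forall>j\<le>i. a j \<le> B" using b0 \<open>i \<le> n\<close> by auto
        then show ?thesis using ups_bound by blast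
      qed
    qed
    have "(Upsilon ^^ 5) (Upsilon a) n \<le> B" using ups_iter_bound[OF b1] by blast
    moreover have "(Upsilon ^^ 6) a = (Upsilon ^^ 5) (Upsilon a)"
    proof -
      have "(Upsilon ^^ (5+1)) a = (Upsilon ^^ 5) ((Upsilon ^^ 1) a)"
        by (simp only: funpow_add comp_apply)
      then show ?thesis by simp
    qed
    ultimately have le: "a n \<le> B" using assms mn(2) by simp
    have "a m < a n" using lt mn(1) by simp
    then show False using le B_def pos by linarith
  qed
  show ?thesis
  proof (intro allI impI)
    fix m n assume h: "enat m < L \<and> enat n < L \<and> champion a m \<and> champion a n"
    show "m = n"
    proof (rule ccontr)
      assume "m \<noteq> n"
      then have "m < n \<or> n < m" by arith
      then show False using key h by blast
    qed
  qed
qed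

end
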